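(* Let \(X\) be a nonempty set, let \((Q, \preccurlyeq_{Q})\) be a poset, and let \(d \colon X^{2} \to Q\) be a \(\preccurlyeq_{Q}\)-pseudoultrametric. Then there is a unique partial order \(\preccurlyeq_{Q}^{0}\) on \(Q\) such that \(d\) is a \(\preccurlyeq_{Q}^{0}\)-pseudoultrametric and \(\preccurlyeq_{Q}^{0} \subseteq \preccurlyeq\) holds whenever \(\preccurlyeq\) is a partial order on \(Q\) for which \(d\) is a \(\preccurlyeq\)-pseudoultrametric.
   Context: For a partial order \(\preccurlyeq\) on \(Q\), a mapping \(d\colon X^2\to Q\) is a \(\preccurlyeq\)-pseudoultrametric if \((Q,\preccurlyeq)\) has a smallest element \(q_0\), \(d\) is symmetric, \(d(x,x)=q_0\) for all \(x\in X\), and for every triple \(\langle x_1,x_2,x_3\rangle\) of points of \(X\) there is a permutation \((i_1,i_2,i_3)\) of \((1,2,3)\) with \(d(x_{i_1},x_{i_3})\preccurlyeq d(x_{i_1},x_{i_2})\) and \(d(x_{i_1},x_{i_2})=d(x_{i_2},x_{i_3})\). Partial orders are regarded as subsets of \(Q\times Q\). *)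

theory Defs
  imports Main
begin

definition ultra_tri :: "('q \<times> 'q) set \<Rightarrow> ('x \<Rightarrow> 'x \<Rightarrow> 'q) \<Rightarrow> 'x \<Rightarrow> 'x \<Rightarrow> 'x \<Rightarrow> bool" where
  "ultra_tri r d a b c \<longleftrightarrow> (d a c, d a b) \<in> r \<and> d a b = d b c"

definition pseudoultrametric ::
  "'x set \<Rightarrow> 'q set \<Rightarrow> ('q \<times> 'q) set \<Rightarrow> ('x \<Rightarrow> 'x \<Rightarrow> 'q) \<Rightarrow> bool" where
  "pseudoultrametric X Q r d \<longleftrightarrow>
     (\<forall>x\<in>X. \<forall>y\<in>X. d x y \<in> Q) \<and>
     (\<exists>q0\<in>Q. (\<forall>q\<in>Q. (q0, q) \<in> r) \<and> (\<forall>x\<in>X. d x x = q0)) \<and>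
     (\<forall>x\<in>X. \<forall>y\<in>X. d x y = d y x) \<and>
     (\<forall>x1\<in>X. \<forall>x2\<in>X. \<forall>x3\<in>X.
        ultra_tri r d x1 x2 x3 \<or> ultra_tri r d x1 x3 x2 \<or>
        ultra_tri r d x2 x1 x3 \<or> ultra_tri r d x2 x3 x1 \<or>
        ultra_tri r d x3 x1 x2 \<or> ultra_tri r d x3 x2 x1)"

end

theory Submission
  imports Defs
begin

lemma key:
  assumes po: "partial_order_on Q R" and pu: "pseudoultrametric X Q R d"
    and a: "a \<in> X" and b: "b \<in> X" and c: "c \<in> X"
    and eq: "d a b = d b c"
    and P: "pseudoultrametric X Q P d"
  shows "(d a c, d a b) \<in> R"
proof (cases "d a c = d a b")
  case True
  have "d a b \<in> Q" using pu a b unfolding pseudoultrametric_def by blast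
  then show ?thesis using True po unfolding partial_order_on_def preorder_on_def refl_on_def by auto
next
  case False
  have sym: "\<forall>x\<in>X. \<forall>y\<in>X. d x y = d y x" using pu unfolding pseudoultrametric_def by blast
  have "ultra_tri R d a b c \<or> ultra_tri R d a c b \<or>
        ultra_tri R d b a c \<or> ultra_tri R d b c a \<or>
        ultra_tri R d c a b \<or> ultra_tri R d c b a"
    using pu a b c unfolding pseudoultrametric_def by blast
  then show ?thesis using False eq sym a b c unfolding ultra_tri_def by metis
qed

theorem proposition3p21:
  fixes X :: "'x set" and Q :: "'q set" and P :: "('q \<times> 'q) set" and d :: "'x \<Rightarrow> 'x \<Rightarrow> 'q"
  assumes "X \<noteq> {}"
    and "partial_order_on Q P"
    and "pseudoultrametric X Q P d"
  shows "\<exists>!P0. partial_order_on Q P0 \<and> pseudoultrametric X Q P0 d \<and>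
           (\<forall>R. partial_order_on Q R \<and> pseudoultrametric X Q R d \<longrightarrow> P0 \<subseteq> R)"
proof -
  define F where "F = {R. partial_order_on Q R \<and> pseudoultrametric X Q R d}"
  define P0 where "P0 = \<Inter>F"
  have PF: "P \<in> F" using assms F_def by blast
  have po: "partial_order_on Q P0"
    unfolding partial_order_on_def preorder_on_def refl_on_def trans_def antisym_on_def
  proof (intro conjI ballI allI impI)
    show "P0 \<subseteq> Q \<times> Q" using PF P0_def F_def partial_order_onD(4) by blast
  next
    fix x assume "x \<in> Q" then show "(x, x) \<in> P0"
      using P0_def F_def partial_order_onD(1) unfolding refl_on_def by blast
  next
    fix x y z assume "(x, y) \<in> P0" "(y, z) \<in> P0" then show "(x, z) \<in> P0"
      using P0_def F_def partial_order_onD(2) unfolding trans_def by blast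
  next
    fix x y assume "(x, y) \<in> P0" "(y, x) \<in> P0" then show "x = y"
      using PF P0_def partial_order_onD(3)[OF assms(2)] unfolding antisym_on_def by blast
  qed
  have pu: "pseudoultrametric X Q P0 d"
  proof -
    obtain x0 where x0: "x0 \<in> X" using assms(1) by blast
    have q0: "\<exists>q0\<in>Q. (\<forall>q\<in>Q. (q0, q) \<in> P0) \<and> (\<forall>x\<in>X. d x x = q0)"
    proof (intro bexI conjI ballI)
      show "d x0 x0 \<in> Q" using assms(3) x0 unfolding pseudoultrametric_def by blast
      fix q assume q: "q \<in> Q"
      show "(d x0 x0, q) \<in> P0" unfolding P0_def
      proof
        fix R assume "R \<in> F"
        then have "pseudoultrametric X Q R d" using F_def by blast
        then obtain r0 where "r0 \<in> Q" "\<forall>q\<in>Q. (r0, q) \<in> R" "\<forall>x\<in>X. d x x = r0"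
          unfolding pseudoultrametric_def by blast
        then show "(d x0 x0, q) \<in> R" using x0 q by auto
      qed
    next
      fix x assume "x \<in> X" then show "d x x = d x0 x0"
        using assms(3) x0 unfolding pseudoultrametric_def by metis
    qed
    have tri: "ultra_tri P0 d a b c" if "a \<in> X" "b \<in> X" "c \<in> X" "ultra_tri P d a b c" for a b c
    proof -
      have "(d a c, d a b) \<in> P0" unfolding P0_def
      proof
        fix R assume "R \<in> F"
        then show "(d a c, d a b) \<in> R" using key[OF _ _ that(1-3) _ assms(3)] that(4)
          unfolding F_def ultra_tri_def by blast
      qed
      then show ?thesis using that(4) unfolding ultra_tri_def by blast
    qed
    show ?thesis unfolding pseudoultrametric_def
      apply (intro conjI q0)
      using assms(3) tri unfolding pseudoultrametric_def by metis+
  qed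
  have least: "\<forall>R. partial_order_on Q R \<and> pseudoultrametric X Q R d \<longrightarrow> P0 \<subseteq> R"
    unfolding P0_def F_def by blast
  show ?thesis
  proof (rule ex1I[of _ P0])
    show "partial_order_on Q P0 \<and> pseudoultrametric X Q P0 d \<and>
           (\<forall>R. partial_order_on Q R \<and> pseudoultrametric X Q R d \<longrightarrow> P0 \<subseteq> R)"
      using po pu least by blast
  next
    fix P1 assume "partial_order_on Q P1 \<and> pseudoultrametric X Q P1 d \<and>
           (\<forall>R. partial_order_on Q R \<and> pseudoultrametric X Q R d \<longrightarrow> P1 \<subseteq> R)"
    then show "P1 = P0" using po pu least by blast
  qed
qed

end
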